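(* Let $(\mathbb L,d)$ be a finite metric space and $m,m_V,\tilde m>0$. Then \[ \sup_{x\in\mathbb L}\sum_{\substack{X\subset\mathbb L\\ F\subset T\in\mathfrak T(X)}}12^{-|X|}c_{\sf g}(m_V)^{-|F|}c_{\sf g}(m)^{-|T\setminus F|}e^{-m_Vd(F)-md(T\setminus F)}e^{-\tilde m d(x;X)}\le c_{\sf g}(\tilde m) \] and \[ \sup_{x\in\mathbb L}\sum_{\substack{X\subset\mathbb L\\ F\subset T\in\mathfrak T(X)}}32^{-|X|}c_{\sf g}(m_V)^{-|F|}c_{\sf g}(m)^{-|T\setminus F|}e^{-m_Vd(F)-md(T\setminus F)}e^{-\tilde m d(x;X)}\prod_{y\in X}d^T(y)!\le c_{\sf g}(\tilde m). \]
   Context: The sums run over nonempty subsets $X\subset\mathbb L$, trees $T\in\mathfrak T(X)$ with vertex set $X$ (for $|X|=1$ the only tree is the edgeless one), and edge subsets $F\subset T$. For a set of edges $F$, $|F|$ is its number of edges and $d(F)=\sum_{\{y,y'\}\in F}d(y,y')$. $d(x;X)=\min_{x'\in X}d(x,x')$. $d^T(y)$ is the degree of $y$ in $T$. The geometric constant is $c_{\sf g}(m)=\sup_{x\in\mathbb L}\sum_{x'\in\mathbb L}e^{-md(x,x')}$. *)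

theory Defs
  imports "HOL-Analysis.Analysis"
begin

text \<open>The finite metric space (L,d) is a finite type 'a of class metric_space, L = UNIV, d = dist.
 Edges are unordered pairs {y,y'} with y \<noteq> y'.\<close>

definition edges_on :: "'a set \<Rightarrow> 'a set set" where
  "edges_on X = {{y, y'} | y y'. y \<in> X \<and> y' \<in> X \<and> y \<noteq> y'}"

definition adj :: "'a set set \<Rightarrow> ('a \<times> 'a) set" where
  "adj T = {(y, y'). {y, y'} \<in> T}"

definition is_tree :: "'a set \<Rightarrow> 'a set set \<Rightarrow> bool" where
  "is_tree X T \<longleftrightarrow> T \<subseteq> edges_on X \<and> card T + 1 = card X \<and>
     (\<forall>y\<in>X. \<forall>y'\<in>X. (y, y') \<in> (adj T)\<^sup>*)"

definition trees :: "'a set \<Rightarrow> 'a set set set" where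
  "trees X = {T. is_tree X T}"

definition edge_len :: "'a::metric_space set \<Rightarrow> real" where
  "edge_len e = (THE r. \<exists>y y'. e = {y, y'} \<and> r = dist y y')"

definition dF :: "'a::metric_space set set \<Rightarrow> real" where
  "dF F = (\<Sum>e\<in>F. edge_len e)"

definition dset :: "'a::metric_space \<Rightarrow> 'a set \<Rightarrow> real" where
  "dset x X = Min ((\<lambda>x'. dist x x') ` X)"

definition tdeg :: "'a set set \<Rightarrow> 'a \<Rightarrow> nat" where
  "tdeg T y = card {e \<in> T. y \<in> e}"

definition cg :: "real \<Rightarrow> 'a::{metric_space,finite} itself \<Rightarrow> real" where
  "cg m _ = (SUP x::'a. \<Sum>x'\<in>UNIV. exp (- m * dist x x'))"

end

theory Submission
  imports Defs
begin


lemma adj_iff: "(a,b) \<in> adj T \<longleftrightarrow> {a,b} \<in> T"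
  by (simp add: adj_def)

lemma adj_conv: "(adj T)\<inverse> = adj T"
  by (auto simp: adj_def insert_commute)

lemma rtr_sym: "(a,b) \<in> (adj T)\<^sup>* \<Longrightarrow> (b,a) \<in> (adj T)\<^sup>*"
  by (metis adj_conv rtrancl_converseI)

lemma edges_onD: "e \<in> edges_on X \<Longrightarrow> \<exists>y y'. e = {y,y'} \<and> y \<in> X \<and> y' \<in> X \<and> y \<noteq> y'"
  by (auto simp: edges_on_def)

lemma edge_pair: "{a,b} \<in> edges_on X \<Longrightarrow> a \<in> X \<and> b \<in> X \<and> a \<noteq> b"
  by (auto simp: edges_on_def doubleton_eq_iff)

lemma finite_edges_on: "finite X \<Longrightarrow> finite (edges_on X)"
proof -
  assume "finite X"
  have "edges_on X \<subseteq> Pow X" by (auto simp: edges_on_def)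
  then show ?thesis using \<open>finite X\<close> by (meson finite_Pow_iff finite_subset)
qed

lemma conn_card:
  assumes fin: "finite X" and rX: "r \<in> X" and TE: "T \<subseteq> edges_on X"
    and conn: "\<forall>y\<in>X. (y, r) \<in> (adj T)\<^sup>*"
  shows "card X \<le> card T + 1"
proof -
  define R where "R = adj T"
  define \<delta> where "\<delta> y = (LEAST n. (y, r) \<in> R ^^ n)" for y
  have ex: "\<exists>n. (y, r) \<in> R ^^ n" if "y \<in> X" for y
  proof -
    have "(y, r) \<in> R\<^sup>*" using conn that unfolding R_def by blast
    then show ?thesis by (simp add: rtrancl_power)
  qed
  have dl: "(y, r) \<in> R ^^ \<delta> y" if "y \<in> X" for y
    unfolding \<delta>_def using ex[OF that] by (rule LeastI_ex)
  have par: "\<exists>z. (y, z) \<in> R \<and> \<delta> z < \<delta> y" if yX: "y \<in> X" and yr: "y \<noteq> r" for y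
  proof (cases "\<delta> y")
    case 0 then show ?thesis using dl[OF yX] yr by simp
  next
    case (Suc m)
    then obtain z where z: "(y, z) \<in> R" "(z, r) \<in> R ^^ m"
      using dl[OF yX] relpow_Suc_D2 by metis
    have "\<delta> z \<le> m" unfolding \<delta>_def using z(2) by (rule Least_le)
    then have "\<delta> z < \<delta> y" using Suc by simp
    then show ?thesis using z(1) by blast
  qed
  define p where "p y = (SOME z. (y, z) \<in> R \<and> \<delta> z < \<delta> y)" for y
  have pp: "(y, p y) \<in> R \<and> \<delta> (p y) < \<delta> y" if "y \<in> X" "y \<noteq> r" for y
    unfolding p_def using par[OF that] by (rule someI_ex)
  define f where "f y = {y, p y}" for y
  have inj: "inj_on f (X - {r})"
  proof (rule inj_onI)
    fix y y' assume y: "y \<in> X - {r}" and y': "y' \<in> X - {r}" and e: "f y = f y'"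
    show "y = y'"
    proof (rule ccontr)
      assume ne: "y \<noteq> y'"
      from e have "{y, p y} = {y', p y'}" unfolding f_def .
      then have h: "y = p y' \<and> y' = p y" using ne unfolding doubleton_eq_iff by metis
      have d1: "\<delta> (p y) < \<delta> y" using pp[of y] y by blast
      have d2: "\<delta> (p y') < \<delta> y'" using pp[of y'] y' by blast
      have "\<delta> y' < \<delta> y" using d1 h by metis
      moreover have "\<delta> y < \<delta> y'" using d2 h by metis
      ultimately show False by simp
    qed
  qed
  have img: "f ` (X - {r}) \<subseteq> T"
  proof
    fix e assume "e \<in> f ` (X - {r})"
    then obtain y where "y \<in> X - {r}" "e = f y" by blast
    then show "e \<in> T" using pp[of y] unfolding f_def R_def by (simp add: adj_iff)
  qed
  have finT: "finite T" using TE finite_edges_on[OF fin] finite_subset by blast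
  have "card (X - {r}) \<le> card T" using card_inj_on_le[OF inj img finT] .
  then show ?thesis using rX fin by (simp add: card_Diff_singleton)
qed

definition spl :: "'a \<Rightarrow> 'a \<Rightarrow> 'a set \<Rightarrow> 'a set set \<Rightarrow> ('a set \<times> 'a set set) \<times> ('a set \<times> 'a set set)" where
  "spl r c X T = (let T' = T - {{r,c}}; X2 = {y\<in>X. (c,y) \<in> (adj T')\<^sup>*}; X1 = X - X2
     in ((X1, {e\<in>T'. e \<subseteq> X1}), (X2, {e\<in>T'. e \<subseteq> X2})))"

lemma tree_split:
  assumes tr: "is_tree X T" and fin: "finite X" and rc: "{r,c} \<in> T"
    and sp: "spl r c X T = ((X1,T1),(X2,T2))"
  shows "is_tree X1 T1 \<and> is_tree X2 T2 \<and> r \<in> X1 \<and> c \<in> X2 \<and> X = X1 \<union> X2 \<and> X1 \<inter> X2 = {}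
    \<and> T = insert {r,c} (T1 \<union> T2) \<and> tdeg T r = Suc (tdeg T1 r) \<and> tdeg T c = Suc (tdeg T2 c)
    \<and> (\<forall>y\<in>X1. y \<noteq> r \<longrightarrow> tdeg T y = tdeg T1 y) \<and> (\<forall>y\<in>X2. y \<noteq> c \<longrightarrow> tdeg T y = tdeg T2 y)
    \<and> card X = card X1 + card X2"
proof -
  define T' where "T' = T - {{r,c}}"
  define X2' where "X2' = {y\<in>X. (c,y) \<in> (adj T')\<^sup>*}"
  have "spl r c X T = ((X - X2', {e\<in>T'. e \<subseteq> X - X2'}), (X2', {e\<in>T'. e \<subseteq> X2'}))"
    unfolding spl_def Let_def T'_def X2'_def by (rule refl)
  then have eqs: "X1 = X - X2'" "T1 = {e\<in>T'. e \<subseteq> X - X2'}" "X2 = X2'" "T2 = {e\<in>T'. e \<subseteq> X2'}"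
    using sp by simp_all
  have X2d: "X2 = {y\<in>X. (c,y) \<in> (adj T')\<^sup>*}" using eqs(3) X2'_def by simp
  have X1d: "X1 = X - X2" using eqs(1,3) by simp
  have T1d: "T1 = {e\<in>T'. e \<subseteq> X1}" using eqs(1,2) by simp
  have T2d: "T2 = {e\<in>T'. e \<subseteq> X2}" using eqs(3,4) by simp
  have TE: "T \<subseteq> edges_on X" and cT: "card T + 1 = card X"
    and conn: "\<forall>y\<in>X. \<forall>y'\<in>X. (y, y') \<in> (adj T)\<^sup>*"
    using tr unfolding is_tree_def by blast+
  have finT: "finite T" using TE finite_edges_on[OF fin] finite_subset by blast
  have rcE: "{r,c} \<in> edges_on X" using rc TE by (rule subsetD[rotated])
  have rcX: "r \<in> X \<and> c \<in> X \<and> r \<noteq> c" using edge_pair[OF rcE] .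
  have T'E: "T' \<subseteq> edges_on X" using TE unfolding T'_def by blast
  have cTp: "card T > 0" using rc finT card_gt_0_iff by blast
  have cT': "card T' + 2 = card X" using cT rc finT cTp unfolding T'_def
    by (simp add: card_Diff_singleton)
  have reach: "(r,y) \<in> (adj T')\<^sup>* \<or> (c,y) \<in> (adj T')\<^sup>*" if "(r,y) \<in> (adj T)\<^sup>*" for y
    using that
  proof (induction rule: rtrancl_induct)
    case base then show ?case by simp
  next
    case (step z y)
    show ?case
    proof (cases "{z,y} = {r,c}")
      case True
      then have "y = r \<or> y = c" by (metis doubleton_eq_iff)
      then show ?thesis by auto
    next
      case False
      then have "(z,y) \<in> adj T'" using step(2) unfolding T'_def adj_iff by simp
      then show ?thesis using step(3) by (meson rtrancl.rtrancl_into_rtrancl)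
    qed
  qed
  have notcr: "(c,r) \<notin> (adj T')\<^sup>*"
  proof
    assume cr: "(c,r) \<in> (adj T')\<^sup>*"
    have "\<forall>y\<in>X. (y,c) \<in> (adj T')\<^sup>*"
    proof
      fix y assume yX: "y \<in> X"
      have "(r,y) \<in> (adj T')\<^sup>* \<or> (c,y) \<in> (adj T')\<^sup>*" using reach conn rcX yX by blast
      then have "(c,y) \<in> (adj T')\<^sup>*" using cr by (meson rtrancl_trans)
      then show "(y,c) \<in> (adj T')\<^sup>*" by (rule rtr_sym)
    qed
    then have "card X \<le> card T' + 1" using conn_card[OF fin _ T'E] rcX by blast
    then show False using cT' by simp
  qed
  have rX1: "r \<in> X1" using rcX notcr unfolding X1d X2d by blast
  have cX2: "c \<in> X2" using rcX unfolding X2d by simp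
  have X2X: "X2 \<subseteq> X" unfolding X2d by blast
  have XU: "X = X1 \<union> X2" and XI: "X1 \<inter> X2 = {}" unfolding X1d using X2X by blast+
  have clos: "y \<in> X2" if "z \<in> X2" "{z,y} \<in> T'" for z y
  proof -
    have yX: "y \<in> X" using edge_pair[OF subsetD[OF T'E that(2)]] by blast
    have cz: "(c,z) \<in> (adj T')\<^sup>*" using that(1) unfolding X2d by blast
    have zy: "(z,y) \<in> adj T'" using that(2) by (simp add: adj_iff)
    have "(c,y) \<in> (adj T')\<^sup>*" using cz zy by (rule rtrancl_into_rtrancl)
    then show ?thesis unfolding X2d using yX by blast
  qed
  have T'U: "T' = T1 \<union> T2"
  proof
    show "T' \<subseteq> T1 \<union> T2"
    proof
      fix e assume eT: "e \<in> T'"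
      then obtain a b where ab: "e = {a,b}" "a \<in> X" "b \<in> X" using edges_onD[OF subsetD[OF T'E eT]] by blast
      have ba: "{b,a} \<in> T'" using eT ab(1) by (simp add: insert_commute)
      show "e \<in> T1 \<union> T2"
      proof (cases "a \<in> X2")
        case True
        then have "b \<in> X2" using clos eT ab(1) by blast
        then show ?thesis using True eT ab unfolding T2d by blast
      next
        case False
        then have "b \<notin> X2" using clos ba by blast
        then show ?thesis using False eT ab XU unfolding T1d by blast
      qed
    qed
  qed (auto simp: T1d T2d)
  have T1X1: "\<forall>e\<in>T1. e \<subseteq> X1" and T2X2: "\<forall>e\<in>T2. e \<subseteq> X2" unfolding T1d T2d by blast+
  have eNE: "\<forall>e\<in>T'. \<exists>a b. e = {a,b}"
  proof
    fix e assume "e \<in> T'"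
    then show "\<exists>a b. e = {a,b}" using edges_onD[OF subsetD[OF T'E]] by blast
  qed
  have TI: "T1 \<inter> T2 = {}"
  proof -
    { fix e assume "e \<in> T1" "e \<in> T2"
      then have "e \<subseteq> X1 \<inter> X2" "e \<in> T'" using T1X1 T2X2 unfolding T1d by blast+
      then have False using XI eNE by blast }
    then show ?thesis by blast
  qed
  have TU: "T = insert {r,c} (T1 \<union> T2)" using T'U rc unfolding T'_def by blast
  have rcn: "{r,c} \<notin> T1 \<union> T2" using T'U unfolding T'_def by blast
  have T1E: "T1 \<subseteq> edges_on X1"
  proof
    fix e assume eT: "e \<in> T1"
    then have "e \<in> T'" unfolding T1d by blast
    then obtain a b where "e = {a,b}" "a \<noteq> b" using edges_onD[OF subsetD[OF T'E]] by blast
    moreover have "a \<in> X1" "b \<in> X1" using eT T1X1 calculation(1) by blast+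
    ultimately show "e \<in> edges_on X1" unfolding edges_on_def by blast
  qed
  have T2E: "T2 \<subseteq> edges_on X2"
  proof
    fix e assume eT: "e \<in> T2"
    then have "e \<in> T'" unfolding T2d by blast
    then obtain a b where "e = {a,b}" "a \<noteq> b" using edges_onD[OF subsetD[OF T'E]] by blast
    moreover have "a \<in> X2" "b \<in> X2" using eT T2X2 calculation(1) by blast+
    ultimately show "e \<in> edges_on X2" unfolding edges_on_def by blast
  qed
  have c1: "(r,y) \<in> (adj T1)\<^sup>*" if "(r,y) \<in> (adj T')\<^sup>*" for y
    using that
  proof (induction rule: rtrancl_induct)
    case base then show ?case by simp
  next
    case (step z y)
    have zy: "{z,y} \<in> T'" using step(2) by (simp add: adj_iff)
    have zX: "z \<in> X" "y \<in> X" using edge_pair[OF subsetD[OF T'E zy]] by blast+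
    have "z \<notin> X2"
    proof
      assume "z \<in> X2"
      then have "(c,z) \<in> (adj T')\<^sup>*" unfolding X2d by blast
      moreover have "(z,r) \<in> (adj T')\<^sup>*" using step(1) by (rule rtr_sym)
      ultimately show False using notcr by (meson rtrancl_trans)
    qed
    moreover have "y \<notin> X2"
    proof
      assume "y \<in> X2"
      then have "(c,y) \<in> (adj T')\<^sup>*" unfolding X2d by blast
      moreover have "(r,y) \<in> (adj T')\<^sup>*" using step(1,2) by (meson rtrancl.rtrancl_into_rtrancl)
      then have "(y,r) \<in> (adj T')\<^sup>*" by (rule rtr_sym)
      ultimately show False using notcr by (meson rtrancl_trans)
    qed
    ultimately have "{z,y} \<in> T1" using zy zX unfolding T1d X1d by blast
    then have "(z,y) \<in> adj T1" by (simp add: adj_iff)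
    then show ?case using step(3) by (meson rtrancl.rtrancl_into_rtrancl)
  qed
  have c2: "(c,y) \<in> (adj T2)\<^sup>*" if "(c,y) \<in> (adj T')\<^sup>*" for y
    using that
  proof (induction rule: rtrancl_induct)
    case base then show ?case by simp
  next
    case (step z y)
    have zy: "{z,y} \<in> T'" using step(2) by (simp add: adj_iff)
    have zX: "z \<in> X" "y \<in> X" using edge_pair[OF subsetD[OF T'E zy]] by blast+
    have "z \<in> X2" using step(1) zX unfolding X2d by blast
    moreover have "y \<in> X2" using calculation zy clos by blast
    ultimately have "{z,y} \<in> T2" using zy unfolding T2d by blast
    then have "(z,y) \<in> adj T2" by (simp add: adj_iff)
    then show ?case using step(3) by (meson rtrancl.rtrancl_into_rtrancl)
  qed
  have conn1: "\<forall>y\<in>X1. (r,y) \<in> (adj T1)\<^sup>*"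
  proof
    fix y assume yX1: "y \<in> X1"
    then have "y \<in> X" "y \<notin> X2" unfolding X1d by blast+
    then have "(c,y) \<notin> (adj T')\<^sup>*" unfolding X2d by blast
    then have "(r,y) \<in> (adj T')\<^sup>*" using reach conn rcX \<open>y \<in> X\<close> by blast
    then show "(r,y) \<in> (adj T1)\<^sup>*" by (rule c1)
  qed
  have conn2: "\<forall>y\<in>X2. (c,y) \<in> (adj T2)\<^sup>*" using c2 unfolding X2d by blast
  have finX1: "finite X1" "finite X2" using fin XU by (simp_all add: finite_subset)
  have finT12: "finite T1" "finite T2" using finT TU by (simp_all add: finite_subset)
  have conn1': "\<forall>y\<in>X1. (y,r) \<in> (adj T1)\<^sup>*" using conn1 rtr_sym[of r _ T1] by blast
  have conn2': "\<forall>y\<in>X2. (y,c) \<in> (adj T2)\<^sup>*" using conn2 rtr_sym[of c _ T2] by blast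
  have k1: "card X1 \<le> card T1 + 1"
    using conn_card[OF finX1(1) rX1 T1E conn1'] .
  have k2: "card X2 \<le> card T2 + 1"
    using conn_card[OF finX1(2) cX2 T2E conn2'] .
  have cX: "card X = card X1 + card X2" using XU XI finX1 by (simp add: card_Un_disjoint)
  have cT12: "card T' = card T1 + card T2" using T'U TI finT12 by (simp add: card_Un_disjoint)
  have e1: "card T1 + 1 = card X1" and e2: "card T2 + 1 = card X2"
    using k1 k2 cX cT12 cT' by linarith+
  have cc1: "\<forall>y\<in>X1. \<forall>y'\<in>X1. (y, y') \<in> (adj T1)\<^sup>*"
  proof (intro ballI)
    fix y y' assume "y \<in> X1" "y' \<in> X1"
    then show "(y, y') \<in> (adj T1)\<^sup>*" using rtrancl_trans[OF conn1'[rule_format] conn1[rule_format]] by blast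
  qed
  have cc2: "\<forall>y\<in>X2. \<forall>y'\<in>X2. (y, y') \<in> (adj T2)\<^sup>*"
  proof (intro ballI)
    fix y y' assume "y \<in> X2" "y' \<in> X2"
    then show "(y, y') \<in> (adj T2)\<^sup>*" using rtrancl_trans[OF conn2'[rule_format] conn2[rule_format]] by blast
  qed
  have tree1: "is_tree X1 T1" unfolding is_tree_def using T1E e1 cc1 by blast
  have tree2: "is_tree X2 T2" unfolding is_tree_def using T2E e2 cc2 by blast
  have dr: "{e\<in>T. r\<in>e} = insert {r,c} {e\<in>T1. r\<in>e}"
    using TU T2X2 rX1 XI by blast
  have dc: "{e\<in>T. c\<in>e} = insert {r,c} {e\<in>T2. c\<in>e}"
    using TU T1X1 cX2 XI by blast
  have tr_: "tdeg T r = Suc (tdeg T1 r)" unfolding tdeg_def dr using rcn finT12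
    by (simp add: card_insert_if)
  have tc_: "tdeg T c = Suc (tdeg T2 c)" unfolding tdeg_def dc using rcn finT12
    by (simp add: card_insert_if)
  have ty1: "\<forall>y\<in>X1. y \<noteq> r \<longrightarrow> tdeg T y = tdeg T1 y"
  proof (intro ballI impI)
    fix y assume y: "y \<in> X1" "y \<noteq> r"
    have "y \<noteq> c" using y cX2 XI by blast
    then have "{e\<in>T. y\<in>e} = {e\<in>T1. y\<in>e}" using TU T2X2 y XI by blast
    then show "tdeg T y = tdeg T1 y" unfolding tdeg_def by simp
  qed
  have ty2: "\<forall>y\<in>X2. y \<noteq> c \<longrightarrow> tdeg T y = tdeg T2 y"
  proof (intro ballI impI)
    fix y assume y: "y \<in> X2" "y \<noteq> c"
    have "y \<noteq> r" using y rX1 XI by blast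
    then have "{e\<in>T. y\<in>e} = {e\<in>T2. y\<in>e}" using TU T1X1 y XI by blast
    then show "tdeg T y = tdeg T2 y" unfolding tdeg_def by simp
  qed
  show ?thesis using tree1 tree2 rX1 cX2 XU XI TU tr_ tc_ ty1 ty2 cX by blast
qed




lemma deg_card:
  assumes "T \<subseteq> edges_on X"
  shows "tdeg T r = card {c. {r,c} \<in> T}"
proof -
  have bij: "bij_betw (\<lambda>c. {r,c}) {c. {r,c} \<in> T} {e\<in>T. r\<in>e}"
  proof (rule bij_betwI')
    fix c c' assume c: "c \<in> {c. {r,c} \<in> T}" and c': "c' \<in> {c. {r,c} \<in> T}"
    have "{r,c} \<in> edges_on X" using c assms by blast
    then have "r \<noteq> c" using edge_pair[of r c X] by simp
    show "({r,c} = {r,c'}) = (c = c')"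
    proof
      assume "{r,c} = {r,c'}"
      then show "c = c'" using \<open>r \<noteq> c\<close> unfolding doubleton_eq_iff by metis
    qed simp
  next
    fix c assume "c \<in> {c. {r,c} \<in> T}"
    then show "{r,c} \<in> {e\<in>T. r\<in>e}" by simp
  next
    fix e assume e: "e \<in> {e\<in>T. r\<in>e}"
    then have "e \<in> edges_on X" using assms by blast
    then obtain a b where ab: "e = {a,b}" using edges_onD by metis
    show "\<exists>c\<in>{c. {r,c} \<in> T}. e = {r,c}"
    proof (cases "a = r")
      case True then show ?thesis using e ab by auto
    next
      case False then have "b = r" using e ab by auto
      then show ?thesis using e ab by (auto simp: insert_commute)
    qed
  qed
  show ?thesis unfolding tdeg_def using bij_betw_same_card[OF bij] by simp
qed

lemma tree_finite: "is_tree X T \<Longrightarrow> finite (X::'a::finite set) \<and> finite T"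
  by simp

lemma tree_deg_le: "is_tree X (T::'a::finite set set) \<Longrightarrow> tdeg T y \<le> CARD('a)"
proof -
  assume tr: "is_tree X T"
  have "tdeg T y \<le> card T" unfolding tdeg_def by (rule card_mono) auto
  also have "card T \<le> card X" using tr unfolding is_tree_def by linarith
  also have "card X \<le> CARD('a)" by (rule card_mono) auto
  finally show ?thesis .
qed

lemma tree_deg0:
  assumes tr: "is_tree X (T::'a::finite set set)" and rX: "r \<in> X" and d: "tdeg T r = 0"
  shows "X = {r} \<and> T = {}"
proof -
  have E: "{e\<in>T. r\<in>e} = {}" using d unfolding tdeg_def by simp
  have "y = r" if yX: "y \<in> X" for y
  proof -
    have "(r,y) \<in> (adj T)\<^sup>*" using tr rX yX unfolding is_tree_def by blast
    then show ?thesis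
    proof (cases rule: converse_rtranclE)
      case base then show ?thesis by simp
    next
      case (step z)
      then have "{r,z} \<in> T" by (simp add: adj_iff)
      then show ?thesis using E by blast
    qed
  qed
  then have X: "X = {r}" using rX by blast
  then have "card T = 0" using tr unfolding is_tree_def by simp
  then show ?thesis using X by simp
qed

locale rb =
  fixes lam :: real and w :: "'a::{finite,metric_space} set \<Rightarrow> real"
    and hh gg \<beta> :: "nat \<Rightarrow> real" and \<rho> :: real
  assumes lam: "lam \<ge> 0" and wnn: "\<And>e. w e \<ge> 0" and wsum: "\<And>r. (\<Sum>c\<in>UNIV. w {r,c}) \<le> 2"
    and hpos: "\<And>k. hh k > 0" and gpos: "\<And>k. gg k > 0" and hgrow: "\<And>j. hh (Suc j) \<le> hh j * gg j"
    and bnn: "\<And>k. \<beta> k \<ge> 0" and b0: "lam * (hh 0 * gg 0) \<le> \<beta> 0"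
    and bstep: "\<And>k. 2 * \<rho> * (hh (Suc k) * gg (Suc k)) * \<beta> k \<le> real (Suc k) * (hh k * gg k) * \<beta> (Suc k)"
    and bsum: "\<And>N. (\<Sum>k\<le>N. \<beta> k) \<le> \<rho>"
begin

definition W where
  "W r p = lam ^ card (fst p) * (\<Prod>e\<in>snd p. w e) * (\<Prod>y\<in>fst p. hh (tdeg (snd p) y)) * gg (tdeg (snd p) r)"
definition PP where "PP n r = {p. r \<in> fst p \<and> card (fst p) \<le> n \<and> is_tree (fst p) (snd p)}"
definition BB where "BB n k r = (\<Sum>p\<in>{p\<in>PP n r. tdeg (snd p) r = k}. W r p)"
definition SS where "SS n r = (\<Sum>p\<in>PP n r. W r p)"

lemma W_nn: "W r p \<ge> 0"
  unfolding W_def using lam wnn hpos gpos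
  by (intro mult_nonneg_nonneg prod_nonneg zero_le_power) (auto intro: less_imp_le)

lemma rho_nn: "\<rho> \<ge> 0"
  using bsum[of 0] bnn[of 0] by simp

lemma SS_BB: "SS n r = (\<Sum>k\<le>CARD('a). BB n k r)"
  unfolding SS_def BB_def
  by (rule sum.group[symmetric]) (auto simp: PP_def intro: tree_deg_le)

lemma SS_le: "(\<And>k. BB n k r \<le> \<beta> k) \<Longrightarrow> SS n r \<le> \<rho>"
proof -
  assume h: "\<And>k. BB n k r \<le> \<beta> k"
  have "SS n r \<le> (\<Sum>k\<le>CARD('a). \<beta> k)" unfolding SS_BB by (rule sum_mono) (rule h)
  also have "\<dots> \<le> \<rho>" by (rule bsum)
  finally show ?thesis .
qed

lemma BB_0: "BB n 0 r \<le> \<beta> 0"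
proof -
  have sub: "{p\<in>PP n r. tdeg (snd p) r = 0} \<subseteq> {({r},{})}"
  proof
    fix p assume "p \<in> {p\<in>PP n r. tdeg (snd p) r = 0}"
    then have "is_tree (fst p) (snd p)" "r \<in> fst p" "tdeg (snd p) r = 0" unfolding PP_def by auto
    then have "fst p = {r} \<and> snd p = {}" by (rule tree_deg0)
    then show "p \<in> {({r},{})}" by (cases p) simp
  qed
  have "BB n 0 r \<le> (\<Sum>p\<in>{({r},{})}. W r p)"
    unfolding BB_def by (rule sum_mono2) (use sub W_nn in auto)
  also have "\<dots> = lam * (hh 0 * gg 0)" by (simp add: W_def tdeg_def)
  also have "\<dots> \<le> \<beta> 0" by (rule b0)
  finally show ?thesis .
qed

lemma ratio:
  assumes p: "(X,T) \<in> PP (Suc n) r" and d: "tdeg T r = Suc k" and rc: "{r,c} \<in> T"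
    and sp: "spl r c X T = ((X1,T1),(X2,T2))"
  shows "(X1,T1) \<in> {p\<in>PP n r. tdeg (snd p) r = k} \<and> (X2,T2) \<in> PP n c
    \<and> hh k * gg k * W r (X,T) \<le> hh (Suc k) * gg (Suc k) * w {r,c} * W r (X1,T1) * W c (X2,T2)"
proof -
  have tr: "is_tree X T" and rX: "r \<in> X" and cX: "card X \<le> Suc n" using p unfolding PP_def by auto
  have S: "is_tree X1 T1 \<and> is_tree X2 T2 \<and> r \<in> X1 \<and> c \<in> X2 \<and> X = X1 \<union> X2 \<and> X1 \<inter> X2 = {}
    \<and> T = insert {r,c} (T1 \<union> T2) \<and> tdeg T r = Suc (tdeg T1 r) \<and> tdeg T c = Suc (tdeg T2 c)
    \<and> (\<forall>y\<in>X1. y \<noteq> r \<longrightarrow> tdeg T y = tdeg T1 y) \<and> (\<forall>y\<in>X2. y \<noteq> c \<longrightarrow> tdeg T y = tdeg T2 y)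
    \<and> card X = card X1 + card X2"
    by (rule tree_split[OF tr _ rc sp]) simp
  then have tr1: "is_tree X1 T1" and tr2: "is_tree X2 T2" and rX1: "r \<in> X1" and cX2: "c \<in> X2"
    and XU: "X = X1 \<union> X2" and XI: "X1 \<inter> X2 = {}" and TU: "T = insert {r,c} (T1 \<union> T2)"
    and dr: "tdeg T r = Suc (tdeg T1 r)" and dc: "tdeg T c = Suc (tdeg T2 c)"
    and d1: "\<forall>y\<in>X1. y \<noteq> r \<longrightarrow> tdeg T y = tdeg T1 y" and d2: "\<forall>y\<in>X2. y \<noteq> c \<longrightarrow> tdeg T y = tdeg T2 y"
    and cXX: "card X = card X1 + card X2"
    by blast+
  have k1: "tdeg T1 r = k" using dr d by simp
  have c1: "card X1 \<ge> 1" using rX1 card_0_eq[of X1] by fastforce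
  have c2: "card X2 \<ge> 1" using cX2 card_0_eq[of X2] by fastforce
  have P1: "(X1,T1) \<in> {p\<in>PP n r. tdeg (snd p) r = k}" unfolding PP_def using tr1 rX1 k1 cX cXX c2 by simp
  have P2: "(X2,T2) \<in> PP n c" unfolding PP_def using tr2 cX2 cX cXX c1 by simp
  have T1E: "T1 \<subseteq> edges_on X1" and T2E: "T2 \<subseteq> edges_on X2" using tr1 tr2 unfolding is_tree_def by blast+
  have rcn: "{r,c} \<notin> T1 \<union> T2"
  proof
    assume "{r,c} \<in> T1 \<union> T2"
    then show False
    proof
      assume "{r,c} \<in> T1"
      then have "{r,c} \<in> edges_on X1" using T1E by blast
      then have "c \<in> X1" using edge_pair[of r c X1] by simp
      then show False using cX2 XI by blast
    next
      assume "{r,c} \<in> T2"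
      then have "{r,c} \<in> edges_on X2" using T2E by blast
      then have "r \<in> X2" using edge_pair[of r c X2] by simp
      then show False using rX1 XI by blast
    qed
  qed
  have TI: "T1 \<inter> T2 = {}"
  proof (rule ccontr)
    assume "T1 \<inter> T2 \<noteq> {}"
    then obtain e where e1: "e \<in> T1" and e2: "e \<in> T2" by blast
    then have "e \<in> edges_on X1" using T1E by blast
    then obtain a b where ab: "e = {a,b}" "a \<in> X1" using edges_onD by metis
    have "e \<in> edges_on X2" using e2 T2E by blast
    then have "a \<in> X2" using ab(1) edge_pair[of a b X2] by simp
    then show False using ab(2) XI by blast
  qed
  define P1 where "P1 = (\<Prod>y\<in>X1-{r}. hh (tdeg T1 y))"
  define P2 where "P2 = (\<Prod>y\<in>X2-{c}. hh (tdeg T2 y))"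
  define E1 where "E1 = (\<Prod>e\<in>T1. w e)"
  define E2 where "E2 = (\<Prod>e\<in>T2. w e)"
  define j where "j = tdeg T2 c"
  have eT: "(\<Prod>e\<in>T. w e) = w {r,c} * (E1 * E2)"
    unfolding TU E1_def E2_def using rcn TI by (simp add: prod.union_disjoint)
  have hX: "(\<Prod>y\<in>X. hh (tdeg T y)) = (\<Prod>y\<in>X1. hh (tdeg T y)) * (\<Prod>y\<in>X2. hh (tdeg T y))"
    unfolding XU using XI by (simp add: prod.union_disjoint)
  have h1: "(\<Prod>y\<in>X1. hh (tdeg T y)) = hh (Suc k) * P1"
  proof -
    have "(\<Prod>y\<in>X1. hh (tdeg T y)) = hh (tdeg T r) * (\<Prod>y\<in>X1-{r}. hh (tdeg T y))"
      using rX1 by (simp add: prod.remove)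
    also have "(\<Prod>y\<in>X1-{r}. hh (tdeg T y)) = P1" unfolding P1_def
      by (rule prod.cong) (use d1 in auto)
    finally show ?thesis using d by simp
  qed
  have h1': "(\<Prod>y\<in>X1. hh (tdeg T1 y)) = hh k * P1"
    unfolding P1_def using rX1 k1 by (simp add: prod.remove)
  have h2: "(\<Prod>y\<in>X2. hh (tdeg T y)) = hh (Suc j) * P2"
  proof -
    have "(\<Prod>y\<in>X2. hh (tdeg T y)) = hh (tdeg T c) * (\<Prod>y\<in>X2-{c}. hh (tdeg T y))"
      using cX2 by (simp add: prod.remove)
    also have "(\<Prod>y\<in>X2-{c}. hh (tdeg T y)) = P2" unfolding P2_def
      by (rule prod.cong) (use d2 in auto)
    finally show ?thesis using dc j_def by simp
  qed
  have h2': "(\<Prod>y\<in>X2. hh (tdeg T2 y)) = hh j * P2"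
    unfolding P2_def j_def using cX2 by (simp add: prod.remove)
  have WX: "W r (X,T) = lam ^ card X1 * lam ^ card X2 * (w {r,c} * (E1 * E2)) * (hh (Suc k) * P1 * (hh (Suc j) * P2)) * gg (Suc k)"
    unfolding W_def using eT hX h1 h2 cXX d by (simp add: power_add)
  have W1: "W r (X1,T1) = lam ^ card X1 * E1 * (hh k * P1) * gg k"
    unfolding W_def E1_def using h1' k1 by simp
  have W2: "W c (X2,T2) = lam ^ card X2 * E2 * (hh j * P2) * gg j"
    unfolding W_def E2_def using h2' j_def by simp
  define C where "C = lam ^ card X1 * lam ^ card X2 * w {r,c} * E1 * E2 * P1 * P2 * hh (Suc k) * gg (Suc k) * hh k * gg k"
  have Cnn: "C \<ge> 0" unfolding C_def E1_def E2_def P1_def P2_def using lam wnn hpos gpos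
    by (intro mult_nonneg_nonneg prod_nonneg zero_le_power) (auto intro: less_imp_le)
  have L: "hh k * gg k * W r (X,T) = C * hh (Suc j)" unfolding WX C_def by (simp add: ac_simps)
  have R: "hh (Suc k) * gg (Suc k) * w {r,c} * W r (X1,T1) * W c (X2,T2) = C * (hh j * gg j)"
    unfolding W1 W2 C_def by (simp add: ac_simps)
  have "C * hh (Suc j) \<le> C * (hh j * gg j)" using hgrow Cnn by (rule mult_left_mono)
  then show ?thesis using P1 P2 L R by simp
qed

lemma BB_step:
  assumes IH: "\<And>k r. BB n k r \<le> \<beta> k"
  shows "BB (Suc n) (Suc k) r \<le> \<beta> (Suc k)"
proof -
  define Q where "Q = {p\<in>PP (Suc n) r. tdeg (snd p) r = Suc k}"
  define A where "A = {p\<in>PP n r. tdeg (snd p) r = k}"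
  define Qc where "Qc c = {p\<in>Q. {r,c} \<in> snd p}" for c
  define q0 where "q0 = hh k * gg k"
  define q1 where "q1 = hh (Suc k) * gg (Suc k)"
  have q0p: "q0 > 0" unfolding q0_def using hpos gpos by simp
  have q1p: "q1 > 0" unfolding q1_def using hpos gpos by simp
  have SSc: "SS n c \<le> \<rho>" for c by (rule SS_le) (rule IH)
  have cnt: "real (Suc k) * W r p = (\<Sum>c\<in>UNIV. if {r,c} \<in> snd p then W r p else 0)" if pQ: "p \<in> Q" for p
  proof -
    have tr: "is_tree (fst p) (snd p)" and d: "tdeg (snd p) r = Suc k" using pQ unfolding Q_def PP_def by auto
    have "tdeg (snd p) r = card {c. {r,c} \<in> snd p}"
      by (rule deg_card[of _ "fst p"]) (use tr in \<open>simp add: is_tree_def\<close>)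
    then have "card {c. {r,c} \<in> snd p} = Suc k" using d by simp
    moreover have "(\<Sum>c\<in>UNIV. if {r,c} \<in> snd p then W r p else 0) = (\<Sum>c\<in>{c. {r,c} \<in> snd p}. W r p)"
      using sum.inter_filter[of UNIV "\<lambda>c. W r p" "\<lambda>c. {r,c} \<in> snd p"] by simp
    ultimately show ?thesis by simp
  qed
  have "real (Suc k) * BB (Suc n) (Suc k) r = (\<Sum>p\<in>Q. real (Suc k) * W r p)"
    unfolding BB_def Q_def by (simp add: sum_distrib_left)
  also have "\<dots> = (\<Sum>p\<in>Q. \<Sum>c\<in>UNIV. if {r,c} \<in> snd p then W r p else 0)"
    by (rule sum.cong) (use cnt in blast)+
  also have "\<dots> = (\<Sum>c\<in>UNIV. \<Sum>p\<in>Q. if {r,c} \<in> snd p then W r p else 0)"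
    by (rule sum.swap)
  also have "\<dots> = (\<Sum>c\<in>UNIV. \<Sum>p\<in>Qc c. W r p)"
    unfolding Qc_def by (simp add: sum.inter_filter)
  finally have eq: "real (Suc k) * BB (Suc n) (Suc k) r = (\<Sum>c\<in>UNIV. \<Sum>p\<in>Qc c. W r p)" .
  have each: "q0 * (\<Sum>p\<in>Qc c. W r p) \<le> q1 * w {r,c} * (BB n k r * SS n c)" for c
  proof -
    define sp where "sp p = spl r c (fst p) (snd p)" for p
    define F where "F pp = q1 * w {r,c} * W r (fst pp) * W c (snd pp)" for pp
    have prp: "sp p \<in> A \<times> PP n c \<and> q0 * W r p \<le> F (sp p)" if pQ: "p \<in> Qc c" for p
    proof -
      obtain X T where pXT: "p = (X,T)" by (cases p)
      obtain X1 T1 X2 T2 where spe: "spl r c X T = ((X1,T1),(X2,T2))" by (metis prod.exhaust)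
      have "(X,T) \<in> PP (Suc n) r" "tdeg T r = Suc k" "{r,c} \<in> T"
        using pQ unfolding pXT Qc_def Q_def by auto
      from ratio[OF this spe] show ?thesis
        unfolding sp_def F_def pXT q0_def q1_def A_def using spe by simp
    qed
    have inj: "inj_on sp (Qc c)"
    proof (rule inj_onI)
      fix p p' assume pQ: "p \<in> Qc c" and pQ': "p' \<in> Qc c" and e: "sp p = sp p'"
      have key: "fst p = fst (fst (sp p)) \<union> fst (snd (sp p)) \<and> snd p = insert {r,c} (snd (fst (sp p)) \<union> snd (snd (sp p)))"
        if pQ: "p \<in> Qc c" for p
      proof -
        obtain X T where pXT: "p = (X,T)" by (cases p)
        obtain X1 T1 X2 T2 where spe: "spl r c X T = ((X1,T1),(X2,T2))" by (metis prod.exhaust)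
        have "is_tree X T" "{r,c} \<in> T" using pQ unfolding pXT Qc_def Q_def PP_def by auto
        from tree_split[OF this(1) _ this(2) spe] show ?thesis
          unfolding sp_def pXT using spe by simp
      qed
      from key[OF pQ] key[OF pQ'] e show "p = p'" by (simp add: prod_eq_iff)
    qed
    have "q0 * (\<Sum>p\<in>Qc c. W r p) = (\<Sum>p\<in>Qc c. q0 * W r p)" by (simp add: sum_distrib_left)
    also have "\<dots> \<le> (\<Sum>p\<in>Qc c. F (sp p))" by (rule sum_mono) (use prp in blast)
    also have "\<dots> = (\<Sum>pp\<in>sp ` Qc c. F pp)" using sum.reindex[OF inj, of F] by simp
    also have "\<dots> \<le> (\<Sum>pp\<in>A \<times> PP n c. F pp)"
    proof (rule sum_mono2)
      show "sp ` Qc c \<subseteq> A \<times> PP n c" using prp by blast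
      show "\<And>b. b \<in> A \<times> PP n c - sp ` Qc c \<Longrightarrow> 0 \<le> F b"
        unfolding F_def using q1p wnn W_nn by (intro mult_nonneg_nonneg) (auto intro: less_imp_le)
    qed simp
    also have "\<dots> = q1 * w {r,c} * ((\<Sum>p\<in>A. W r p) * (\<Sum>p\<in>PP n c. W c p))"
    proof -
      have "(\<Sum>pp\<in>A \<times> PP n c. F pp) = (\<Sum>(a,b)\<in>A \<times> PP n c. F (a,b))"
        by (simp add: case_prod_beta)
      also have "\<dots> = (\<Sum>a\<in>A. \<Sum>b\<in>PP n c. F (a,b))"
        by (rule sum.cartesian_product[symmetric])
      also have "\<dots> = q1 * w {r,c} * ((\<Sum>p\<in>A. W r p) * (\<Sum>p\<in>PP n c. W c p))"
        unfolding F_def sum_product by (simp add: sum_distrib_left mult.assoc)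
      finally show ?thesis .
    qed
    also have "\<dots> = q1 * w {r,c} * (BB n k r * SS n c)" unfolding A_def BB_def SS_def by simp
    finally show ?thesis .
  qed
  have "q0 * (real (Suc k) * BB (Suc n) (Suc k) r) = (\<Sum>c\<in>UNIV. q0 * (\<Sum>p\<in>Qc c. W r p))"
    unfolding eq by (simp add: sum_distrib_left)
  also have "\<dots> \<le> (\<Sum>c\<in>UNIV. q1 * w {r,c} * (BB n k r * SS n c))" by (rule sum_mono) (rule each)
  also have "\<dots> \<le> (\<Sum>c\<in>UNIV. q1 * w {r,c} * (\<beta> k * \<rho>))"
  proof (rule sum_mono)
    fix c :: 'a
    have "BB n k r * SS n c \<le> \<beta> k * \<rho>"
      by (rule mult_mono) (use IH SSc bnn in \<open>auto simp: SS_def intro: sum_nonneg W_nn\<close>)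
    moreover have "q1 * w {r,c} \<ge> 0" using q1p wnn by (simp add: less_imp_le)
    ultimately show "q1 * w {r,c} * (BB n k r * SS n c) \<le> q1 * w {r,c} * (\<beta> k * \<rho>)"
      by (rule mult_left_mono)
  qed
  also have "\<dots> = q1 * (\<beta> k * \<rho>) * (\<Sum>c\<in>UNIV. w {r,c})"
    by (simp add: sum_distrib_left sum_distrib_right ac_simps)
  also have "\<dots> \<le> q1 * (\<beta> k * \<rho>) * 2"
    by (rule mult_left_mono) (use wsum q1p bnn rho_nn in auto)
  also have "\<dots> = 2 * \<rho> * q1 * \<beta> k" by simp
  also have "\<dots> \<le> real (Suc k) * q0 * \<beta> (Suc k)" unfolding q0_def q1_def by (rule bstep)
  finally have "(real (Suc k) * q0) * BB (Suc n) (Suc k) r \<le> (real (Suc k) * q0) * \<beta> (Suc k)"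
    by (simp add: ac_simps)
  moreover have "real (Suc k) * q0 > 0" using q0p by simp
  ultimately show ?thesis using mult_le_cancel_left_pos by blast
qed

lemma BB_all: "BB n k r \<le> \<beta> k"
proof (induction n arbitrary: k r)
  case 0
  have "PP 0 r = {}" unfolding PP_def using card_0_eq by fastforce
  then show ?case unfolding BB_def using bnn by simp
next
  case (Suc n)
  show ?case
  proof (cases k)
    case 0 then show ?thesis using BB_0 by simp
  next
    case (Suc k') then show ?thesis using BB_step Suc.IH by simp
  qed
qed

lemma SS_all: "SS n r \<le> \<rho>"
  by (rule SS_le) (rule BB_all)

lemma key:
  assumes g1: "\<And>j. gg j \<ge> 1"
  shows "(\<Sum>X\<in>{X::'a set. X \<noteq> {}}. \<Sum>T\<in>trees X. lam ^ card X * (\<Prod>e\<in>T. w e) * exp (- mt * dset x X) * (\<Prod>y\<in>X. hh (tdeg T y)))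
    \<le> \<rho> * (\<Sum>r\<in>UNIV. exp (- mt * dist x r))"
proof -
  define g where "g r p = exp (- mt * dist x r) * W r p" for r p
  define SIG where "SIG = Sigma {X::'a set. X \<noteq> {}} trees"
  have t: "lam ^ card X * (\<Prod>e\<in>T. w e) * exp (- mt * dset x X) * (\<Prod>y\<in>X. hh (tdeg T y)) \<le> (\<Sum>r\<in>X. g r (X,T))"
    if XE: "X \<noteq> {}" for X T
  proof -
    define base where "base = lam ^ card X * (\<Prod>e\<in>T. w e) * (\<Prod>y\<in>X. hh (tdeg T y))"
    have bnn': "base \<ge> 0" unfolding base_def using lam wnn hpos
      by (intro mult_nonneg_nonneg prod_nonneg zero_le_power) (auto intro: less_imp_le)
    have bW: "base \<le> W r (X,T)" for r
    proof -
      have "base * 1 \<le> base * gg (tdeg T r)" using g1 bnn' by (rule mult_left_mono)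
      then show ?thesis unfolding W_def base_def by simp
    qed
    have "dset x X \<in> (\<lambda>x'. dist x x') ` X" unfolding dset_def using XE by (intro Min_in) auto
    then obtain r0 where r0: "r0 \<in> X" "dset x X = dist x r0" by blast
    have ed: "exp (- mt * dset x X) \<le> (\<Sum>r\<in>X. exp (- mt * dist x r))"
      unfolding r0(2) by (rule member_le_sum) (use r0 in auto)
    have "lam ^ card X * (\<Prod>e\<in>T. w e) * exp (- mt * dset x X) * (\<Prod>y\<in>X. hh (tdeg T y)) = base * exp (- mt * dset x X)"
      unfolding base_def by (simp add: ac_simps)
    also have "\<dots> \<le> base * (\<Sum>r\<in>X. exp (- mt * dist x r))" using ed bnn' by (rule mult_left_mono)
    also have "\<dots> = (\<Sum>r\<in>X. exp (- mt * dist x r) * base)" by (simp add: sum_distrib_left ac_simps)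
    also have "\<dots> \<le> (\<Sum>r\<in>X. g r (X,T))" unfolding g_def
      by (rule sum_mono) (rule mult_left_mono[OF bW], simp)
    finally show ?thesis .
  qed
  have "(\<Sum>X\<in>{X::'a set. X \<noteq> {}}. \<Sum>T\<in>trees X. lam ^ card X * (\<Prod>e\<in>T. w e) * exp (- mt * dset x X) * (\<Prod>y\<in>X. hh (tdeg T y)))
     \<le> (\<Sum>X\<in>{X::'a set. X \<noteq> {}}. \<Sum>T\<in>trees X. \<Sum>r\<in>X. g r (X,T))"
    by (intro sum_mono) (use t in simp)
  also have "\<dots> = (\<Sum>p\<in>SIG. \<Sum>r\<in>fst p. g r p)"
    unfolding SIG_def by (subst sum.Sigma) (auto simp: case_prod_beta)
  also have "\<dots> = (\<Sum>p\<in>SIG. \<Sum>r\<in>{r\<in>UNIV. r \<in> fst p}. g r p)" by simp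
  also have "\<dots> = (\<Sum>r\<in>UNIV. \<Sum>p\<in>{p\<in>SIG. r \<in> fst p}. g r p)"
    by (rule sum.swap_restrict) simp_all
  also have "\<dots> = (\<Sum>r\<in>UNIV. exp (- mt * dist x r) * SS CARD('a) r)"
  proof (rule sum.cong)
    fix r :: 'a
    have "{p\<in>SIG. r \<in> fst p} = PP CARD('a) r"
    proof -
      have "card X \<le> CARD('a)" for X :: "'a set" by (rule card_mono) auto
      then show ?thesis unfolding SIG_def PP_def trees_def by auto
    qed
    then show "(\<Sum>p\<in>{p\<in>SIG. r \<in> fst p}. g r p) = exp (- mt * dist x r) * SS CARD('a) r"
      unfolding g_def SS_def by (simp add: sum_distrib_left)
  qed simp
  also have "\<dots> \<le> (\<Sum>r\<in>UNIV. exp (- mt * dist x r) * \<rho>)"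
    by (rule sum_mono) (rule mult_left_mono[OF SS_all], simp)
  also have "\<dots> = \<rho> * (\<Sum>r\<in>UNIV. exp (- mt * dist x r))" by (simp add: sum_distrib_left ac_simps)
  finally show ?thesis .
qed

end

lemma edge_len_pair: "edge_len {a,b} = dist a b"
  unfolding edge_len_def
proof (rule the_equality)
  show "\<exists>y y'. {a,b} = {y,y'} \<and> dist a b = dist y y'" by blast
next
  fix r assume "\<exists>y y'. {a,b} = {y,y'} \<and> r = dist y y'"
  then obtain y y' where "{a,b} = {y,y'}" "r = dist y y'" by blast
  then show "r = dist a b" unfolding doubleton_eq_iff by (metis dist_commute)
qed

lemma cg_upper: "(\<Sum>x'\<in>UNIV. exp (- mm * dist (x::'a) x')) \<le> cg mm TYPE('a::{metric_space,finite})"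
proof -
  have "bdd_above (range (\<lambda>x::'a. \<Sum>x'\<in>UNIV. exp (- mm * dist x x')))"
    by (rule bdd_above_finite) simp
  then show ?thesis
    unfolding cg_def using cSUP_upper[of x UNIV "\<lambda>x. \<Sum>x'\<in>UNIV. exp (- mm * dist x x')"] by simp
qed

lemma cg_ge1: "cg mm TYPE('a::{metric_space,finite}) \<ge> 1"
proof -
  have "exp (- mm * dist x x) \<le> (\<Sum>x'\<in>UNIV. exp (- mm * dist (x::'a) x'))"
    by (rule member_le_sum) auto
  then show ?thesis using cg_upper[of mm "x::'a"] by simp
qed

lemma geo: "(\<Sum>k\<le>N. (1/2::real) ^ k) = 2 - (1/2) ^ N"
  by (induction N) (simp_all add: power_Suc)

lemma geo_le: "(\<Sum>k\<le>N. c * (1/2::real) ^ k) \<le> 2 * c" if "c \<ge> 0"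
proof -
  have "(\<Sum>k\<le>N. c * (1/2::real) ^ k) = c * (2 - (1/2) ^ N)" by (simp add: sum_distrib_left[symmetric] geo)
  also have "\<dots> \<le> c * 2" using that by (intro mult_left_mono) auto
  finally show ?thesis by simp
qed

lemma Fsum:
  assumes "finite T"
  shows "(\<Sum>F\<in>Pow T. iV ^ card F * iM ^ card (T - F) * exp (- mV * dF F - m * dF (T - F)))
    = (\<Prod>e\<in>T. iV * exp (- mV * edge_len e) + iM * exp (- m * edge_len e))"
proof -
  have fF: "finite F" if "F \<in> Pow T" for F using that assms finite_subset by blast
  have "(\<Prod>e\<in>T. iV * exp (- mV * edge_len e) + iM * exp (- m * edge_len e))
     = (\<Sum>F\<in>Pow T. (\<Prod>e\<in>F. iV * exp (- mV * edge_len e)) * (\<Prod>e\<in>T - F. iM * exp (- m * edge_len e)))"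
    by (rule prod_add[OF assms])
  also have "\<dots> = (\<Sum>F\<in>Pow T. iV ^ card F * iM ^ card (T - F) * exp (- mV * dF F - m * dF (T - F)))"
  proof (rule sum.cong)
    fix F assume F: "F \<in> Pow T"
    have x1: "(\<Prod>e\<in>F. exp (- mV * edge_len e)) = exp (\<Sum>e\<in>F. - mV * edge_len e)"
      by (rule exp_sum[symmetric]) (rule fF[OF F])
    have x2: "(\<Prod>e\<in>T - F. exp (- m * edge_len e)) = exp (\<Sum>e\<in>T - F. - m * edge_len e)"
      by (rule exp_sum[symmetric]) (use assms in simp)
    have y1: "(\<Sum>e\<in>F. - mV * edge_len e) = - mV * dF F" unfolding dF_def by (simp add: sum_distrib_left)
    have y2: "(\<Sum>e\<in>T - F. - m * edge_len e) = - m * dF (T - F)" unfolding dF_def by (simp add: sum_distrib_left)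
    have e1: "(\<Prod>e\<in>F. iV * exp (- mV * edge_len e)) = iV ^ card F * exp (- mV * dF F)"
      unfolding prod.distrib x1 y1 by simp
    have e2: "(\<Prod>e\<in>T - F. iM * exp (- m * edge_len e)) = iM ^ card (T - F) * exp (- m * dF (T - F))"
      unfolding prod.distrib x2 y2 by simp
    have e3: "exp (- mV * dF F - m * dF (T - F)) = exp (- mV * dF F) * exp (- m * dF (T - F))"
      by (simp add: exp_diff exp_minus field_simps)
    show "(\<Prod>e\<in>F. iV * exp (- mV * edge_len e)) * (\<Prod>e\<in>T - F. iM * exp (- m * edge_len e))
      = iV ^ card F * iM ^ card (T - F) * exp (- mV * dF F - m * dF (T - F))"
      unfolding e1 e2 e3 by (simp add: ac_simps)
  qed simp
  finally show ?thesis by simp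
qed


lemma sum_ab: "(\<Sum>F\<in>A. a * u F * v F * z F * b) = a * (\<Sum>F\<in>A. u F * v F * z F) * (b::real)"
  by (simp add: sum_distrib_left sum_distrib_right mult.assoc)

theorem lemma5p6:
  fixes m mV mt :: real
  assumes "m > 0" "mV > 0" "mt > 0"
  shows "(SUP x::'a::{metric_space,finite}.
            \<Sum>X\<in>{X::'a set. X \<noteq> {}}. \<Sum>T\<in>trees X. \<Sum>F\<in>Pow T.
              (1/12) ^ card X * inverse (cg mV TYPE('a)) ^ card F
              * inverse (cg m TYPE('a)) ^ card (T - F)
              * exp (- mV * dF F - m * dF (T - F)) * exp (- mt * dset x X))
           \<le> cg mt TYPE('a)
       \<and> (SUP x::'a.
            \<Sum>X\<in>{X::'a set. X \<noteq> {}}. \<Sum>T\<in>trees X. \<Sum>F\<in>Pow T.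
              (1/32) ^ card X * inverse (cg mV TYPE('a)) ^ card F
              * inverse (cg m TYPE('a)) ^ card (T - F)
              * exp (- mV * dF F - m * dF (T - F)) * exp (- mt * dset x X)
              * (\<Prod>y\<in>X. real (fact (tdeg T y))))
           \<le> cg mt TYPE('a)"
proof -
  define iV where "iV = inverse (cg mV TYPE('a))"
  define iM where "iM = inverse (cg m TYPE('a))"
  define w where "w e = iV * exp (- mV * edge_len e) + iM * exp (- m * edge_len e)" for e :: "'a set"
  have cV: "cg mV TYPE('a) \<ge> 1" and cM: "cg m TYPE('a) \<ge> 1" and cT: "cg mt TYPE('a) \<ge> 1"
    by (rule cg_ge1)+
  have iVp: "iV > 0" and iMp: "iM > 0" unfolding iV_def iM_def using cV cM by auto
  have wnn: "w e \<ge> 0" for e unfolding w_def using iVp iMp by (intro add_nonneg_nonneg mult_nonneg_nonneg) auto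
  have wsum: "(\<Sum>c\<in>UNIV. w {r,c}) \<le> 2" for r
  proof -
    have "(\<Sum>c\<in>UNIV. w {r,c}) = iV * (\<Sum>c\<in>UNIV. exp (- mV * dist r c)) + iM * (\<Sum>c\<in>UNIV. exp (- m * dist r c))"
      unfolding w_def edge_len_pair by (simp add: sum.distrib sum_distrib_left)
    also have "\<dots> \<le> iV * cg mV TYPE('a) + iM * cg m TYPE('a)"
      using cg_upper[of mV r] cg_upper[of m r] iVp iMp by (intro add_mono mult_left_mono) auto
    also have "\<dots> = 2" unfolding iV_def iM_def using cV cM by simp
    finally show ?thesis .
  qed
  have geo2: "(\<Sum>k\<le>N. c * (1/2::real) ^ k) \<le> 2 * c" if "c \<ge> 0" for c N using geo_le[OF that] .
  have R1: "rb (1/12) w (\<lambda>_. 1) (\<lambda>_. 1) (\<lambda>k. (1/12) * (1/2::real) ^ k) (1/4)"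
  proof (unfold_locales)
    fix N show "(\<Sum>k\<le>N. (1/12) * (1/2::real) ^ k) \<le> 1/4" using geo2[of "1/12" N] by simp
  qed (use wnn wsum in \<open>auto simp: field_simps\<close>)
  have R2: "rb (1/32) w (\<lambda>k. real (fact k)) (\<lambda>k. real k + 1) (\<lambda>k. (1/32) * (1/2::real) ^ k) (1/8)"
  proof (unfold_locales)
    fix N show "(\<Sum>k\<le>N. (1/32) * (1/2::real) ^ k) \<le> 1/8" using geo2[of "1/32" N] by simp
  next
    fix k :: nat
    have "(k + 2) / 4 \<le> real (Suc k) / 2" by simp
    show "2 * (1/8) * (real (fact (Suc k)) * (real (Suc k) + 1)) * ((1/32) * (1/2::real) ^ k)
      \<le> real (Suc k) * (real (fact k) * (real k + 1)) * ((1/32) * (1/2) ^ Suc k)"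
      by (simp add: field_simps)
  qed (use wnn wsum in \<open>auto simp: field_simps\<close>)
  have Sx: "(\<Sum>r\<in>UNIV. exp (- mt * dist x r)) \<le> cg mt TYPE('a)" for x :: 'a by (rule cg_upper)
  have Sxn: "(\<Sum>r\<in>UNIV. exp (- mt * dist x r)) \<ge> 0" for x :: 'a by (simp add: sum_nonneg)
  have B1: "(\<Sum>X\<in>{X::'a set. X \<noteq> {}}. \<Sum>T\<in>trees X. \<Sum>F\<in>Pow T.
              (1/12) ^ card X * inverse (cg mV TYPE('a)) ^ card F
              * inverse (cg m TYPE('a)) ^ card (T - F)
              * exp (- mV * dF F - m * dF (T - F)) * exp (- mt * dset x X)) \<le> cg mt TYPE('a)" for x :: 'a
  proof -
    have "(\<Sum>X\<in>{X::'a set. X \<noteq> {}}. \<Sum>T\<in>trees X. \<Sum>F\<in>Pow T.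
              (1/12) ^ card X * inverse (cg mV TYPE('a)) ^ card F
              * inverse (cg m TYPE('a)) ^ card (T - F)
              * exp (- mV * dF F - m * dF (T - F)) * exp (- mt * dset x X))
      = (\<Sum>X\<in>{X::'a set. X \<noteq> {}}. \<Sum>T\<in>trees X. (1/12) ^ card X * (\<Prod>e\<in>T. w e) * exp (- mt * dset x X) * (\<Prod>y\<in>X. (\<lambda>_. 1::real) (tdeg T y)))"
      unfolding sum_ab Fsum[OF finite] w_def iV_def iM_def by simp
    also have "\<dots> \<le> 1/4 * (\<Sum>r\<in>UNIV. exp (- mt * dist x r))"
      by (rule rb.key[OF R1]) simp
    also have "\<dots> \<le> cg mt TYPE('a)" using Sx[of x] Sxn[of x] by linarith
    finally show ?thesis .
  qed
  have B2: "(\<Sum>X\<in>{X::'a set. X \<noteq> {}}. \<Sum>T\<in>trees X. \<Sum>F\<in>Pow T.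
              (1/32) ^ card X * inverse (cg mV TYPE('a)) ^ card F
              * inverse (cg m TYPE('a)) ^ card (T - F)
              * exp (- mV * dF F - m * dF (T - F)) * exp (- mt * dset x X)
              * (\<Prod>y\<in>X. real (fact (tdeg T y)))) \<le> cg mt TYPE('a)" for x :: 'a
  proof -
    have "(\<Sum>X\<in>{X::'a set. X \<noteq> {}}. \<Sum>T\<in>trees X. \<Sum>F\<in>Pow T.
              (1/32) ^ card X * inverse (cg mV TYPE('a)) ^ card F
              * inverse (cg m TYPE('a)) ^ card (T - F)
              * exp (- mV * dF F - m * dF (T - F)) * exp (- mt * dset x X)
              * (\<Prod>y\<in>X. real (fact (tdeg T y))))
      = (\<Sum>X\<in>{X::'a set. X \<noteq> {}}. \<Sum>T\<in>trees X. \<Sum>F\<in>Pow T.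
              (1/32) ^ card X * inverse (cg mV TYPE('a)) ^ card F
              * inverse (cg m TYPE('a)) ^ card (T - F)
              * exp (- mV * dF F - m * dF (T - F)) * (exp (- mt * dset x X)
              * (\<Prod>y\<in>X. real (fact (tdeg T y)))))"
      by (simp add: mult.assoc)
    also have "\<dots> = (\<Sum>X\<in>{X::'a set. X \<noteq> {}}. \<Sum>T\<in>trees X. (1/32) ^ card X * (\<Prod>e\<in>T. w e) * exp (- mt * dset x X) * (\<Prod>y\<in>X. real (fact (tdeg T y))))"
      unfolding sum_ab Fsum[OF finite] w_def iV_def iM_def by (simp add: mult.assoc)
    also have "\<dots> \<le> 1/8 * (\<Sum>r\<in>UNIV. exp (- mt * dist x r))"
      by (rule rb.key[OF R2]) simp
    also have "\<dots> \<le> cg mt TYPE('a)" using Sx[of x] Sxn[of x] by linarith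
    finally show ?thesis .
  qed
  show ?thesis
    by (intro conjI cSUP_least) (use B1 B2 in auto)
qed


end
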